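(* Let $x_1,\dots,x_n$ be fixed data, $2\le k\le n$, and $s$ a real-valued permutation-symmetric function of $k$ arguments. Let $(I_1,\dots,I_k)$ be uniformly distributed over all $k$-tuples of distinct indices in $\{1,\dots,n\}$, $X_i^*=x_{I_i}$, $s^*=s(X_1^*,\dots,X_k^* )$, $\mathcal{D}^*=\{I_1,\dots,I_k\}$, and with $\mathbb{E}_*,\mathrm{Cov}_*$ denoting expectation and covariance over this subsampling let $s_0=\mathbb{E}_*[s^*]$, $e_i=\mathbb{E}_*[s^*\mid I_1=i]$ and, for $i\ne j$, $e_{ij}=\mathbb{E}_*[s^*\mid I_1=i,I_2=j]$. For $i\ne j$ define $$w_{ij}^*=\mathbf{1}\{i,j\in\mathcal{D}^*\}-\frac{k-1}{n-1}\mathbf{1}\{i\in\mathcal{D}^*\}-\frac{k-1}{n-1}\mathbf{1}\{j\in\mathcal{D}^*\}+\frac{k(k-1)}{n(n-1)}.$$ Then $$\mathrm{Cov}_*(s^*,w_{ij}^* )=\frac{\binom{k}{2}}{\binom{n}{2}}\,(e_{ij}-e_i-e_j+s_0),$$ and consequently $$\mathrm{ps}\text{-}\mathrm{IJ}_\mathrm{U}(2):=\sum_{i<j}\mathrm{Cov}_*^2(s^*,w_{ij}^* )=\frac{\binom{k}{2}^2}{\binom{n}{2}^2}\sum_{i<j}(e_{ij}-e_i-e_j+s_0)^2.$$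
   Context: Subsampling is without replacement and conditional on the data. *)

theory Defs
  imports "HOL-Probability.Probability"
begin

definition pmf_cov :: "'b pmf \<Rightarrow> ('b \<Rightarrow> real) \<Rightarrow> ('b \<Rightarrow> real) \<Rightarrow> real" where
  "pmf_cov p X Y =
     measure_pmf.expectation p (\<lambda>w. (X w - measure_pmf.expectation p X) *
                                    (Y w - measure_pmf.expectation p Y))"

definition dtuples :: "nat \<Rightarrow> nat \<Rightarrow> nat list set" where
  "dtuples n k = {I. length I = k \<and> distinct I \<and> set I \<subseteq> {1..n}}"

definition subsamp :: "nat \<Rightarrow> nat \<Rightarrow> nat list pmf" where
  "subsamp n k = pmf_of_set (dtuples n k)"

definition sym_fun :: "nat \<Rightarrow> ('a list \<Rightarrow> real) \<Rightarrow> bool" where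
  "sym_fun k s \<longleftrightarrow> (\<forall>xs ys. length xs = k \<longrightarrow> mset xs = mset ys \<longrightarrow> s xs = s ys)"

definition wstar :: "nat \<Rightarrow> nat \<Rightarrow> nat \<Rightarrow> nat \<Rightarrow> nat list \<Rightarrow> real" where
  "wstar n k i j I =
     of_bool (i \<in> set I \<and> j \<in> set I)
     - (real k - 1) / (real n - 1) * of_bool (i \<in> set I)
     - (real k - 1) / (real n - 1) * of_bool (j \<in> set I)
     + real k * (real k - 1) / (real n * (real n - 1))"

end

theory Submission
  imports Defs
begin


definition tr :: "nat \<Rightarrow> nat \<Rightarrow> nat \<Rightarrow> nat" where
  "tr a b x = (if x = a then b else if x = b then a else x)"

definition swp :: "nat \<Rightarrow> nat \<Rightarrow> 'b list \<Rightarrow> 'b list" where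
  "swp p q I = I[p := I!q, q := I!p]"

lemma tr_tr[simp]: "tr a b (tr a b x) = x" by (auto simp: tr_def)
lemma tr_eq_iff: "tr a b x = b \<longleftrightarrow> x = a" by (auto simp: tr_def)
lemma inj_tr: "inj (tr a b)" by (metis injI tr_tr)

lemma swp_length[simp]: "length (swp p q I) = length I" by (simp add: swp_def)

lemma swp_nth: "p < length I \<Longrightarrow> q < length I \<Longrightarrow> r < length I \<Longrightarrow> swp p q I ! r = I ! tr p q r"
  by (auto simp: swp_def tr_def nth_list_update)

lemma swp_swp: "p < length I \<Longrightarrow> q < length I \<Longrightarrow> swp p q (swp p q I) = I"
  by (rule nth_equalityI) (auto simp: swp_nth tr_def)

lemma tr_lt: "p < k \<Longrightarrow> q < k \<Longrightarrow> r < k \<Longrightarrow> tr p q r < k" by (auto simp: tr_def)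

lemma swp_D: "I \<in> dtuples n k \<Longrightarrow> p < k \<Longrightarrow> q < k \<Longrightarrow> swp p q I \<in> dtuples n k"
  by (auto simp: dtuples_def swp_def)

lemma swp_mset: "p < length I \<Longrightarrow> q < length I \<Longrightarrow> mset (swp p q I) = mset I"
  unfolding swp_def by (rule mset_swap)

lemma sum_swp: assumes "p < k" "q < k"
  shows "(\<Sum>I\<in>dtuples n k. F I) = (\<Sum>I\<in>dtuples n k. F (swp p q I))"
  by (rule sum.reindex_bij_witness[of _ "swp p q" "swp p q"])
     (use assms swp_D[of _ n k p q] in \<open>auto simp: swp_swp dtuples_def\<close>)

lemma maptr_D: "I \<in> dtuples n k \<Longrightarrow> a \<in> {1..n} \<Longrightarrow> b \<in> {1..n} \<Longrightarrow> map (tr a b) I \<in> dtuples n k"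
  by (auto simp: dtuples_def distinct_map inj_on_def tr_def)

lemma sum_maptr: assumes "a \<in> {1..n}" "b \<in> {1..n}"
  shows "(\<Sum>I\<in>dtuples n k. F I) = (\<Sum>I\<in>dtuples n k. F (map (tr a b) I))"
  by (rule sum.reindex_bij_witness[of _ "map (tr a b)" "map (tr a b)"])
     (use assms in \<open>auto simp: maptr_D comp_def\<close>)

lemma finite_D: "finite (dtuples n k)"
proof -
  have "dtuples n k \<subseteq> {xs. set xs \<subseteq> {1..n} \<and> length xs = k}" by (auto simp: dtuples_def)
  thus ?thesis by (rule finite_subset) (simp add: finite_lists_length_eq)
qed

lemma D_ne: "k \<le> n \<Longrightarrow> [1..<k+1] \<in> dtuples n k"
  by (auto simp: dtuples_def)

lemma count1: assumes "I \<in> dtuples n k"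
  shows "(\<Sum>p<k. of_bool (I!p = i) :: real) = of_bool (i \<in> set I)"
proof -
  have L: "length I = k" "distinct I" using assms by (auto simp: dtuples_def)
  show ?thesis
  proof (cases "i \<in> set I")
    case True
    then obtain p where p: "p < k" "I ! p = i" using L by (auto simp: in_set_conv_nth)
    have "(\<Sum>q<k. of_bool (I!q = i) :: real) = (\<Sum>q<k. if q = p then 1 else 0)"
      apply (rule sum.cong, simp)
      using L p nth_eq_iff_index_eq by fastforce
    thus ?thesis using True p by simp
  next
    case False
    then show ?thesis using L by (auto simp: in_set_conv_nth)
  qed
qed

lemma pos1:
  assumes inv: "\<And>I p q. I \<in> dtuples n k \<Longrightarrow> p < k \<Longrightarrow> q < k \<Longrightarrow> f (swp p q I) = f I"
    and p: "p < k" and q: "q < k"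
  shows "(\<Sum>I\<in>dtuples n k. f I * G (I!p)) = (\<Sum>I\<in>dtuples n k. f I * G (I!q))"
proof -
  have "(\<Sum>I\<in>dtuples n k. f I * G (I!p)) = (\<Sum>I\<in>dtuples n k. f (swp p q I) * G (swp p q I ! p))"
    by (rule sum_swp[OF p q])
  also have "\<dots> = (\<Sum>I\<in>dtuples n k. f I * G (I!q))"
    by (rule sum.cong) (use p q inv in \<open>auto simp: swp_nth tr_def dtuples_def\<close>)
  finally show ?thesis .
qed

lemma single:
  assumes inv: "\<And>I p q. I \<in> dtuples n k \<Longrightarrow> p < k \<Longrightarrow> q < k \<Longrightarrow> f (swp p q I) = f I"
    and k: "1 \<le> k"
  shows "(\<Sum>I\<in>dtuples n k. f I * of_bool (i \<in> set I)) = real k * (\<Sum>I\<in>dtuples n k. f I * of_bool (I!0 = i))"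
proof -
  have "(\<Sum>I\<in>dtuples n k. f I * of_bool (i \<in> set I)) = (\<Sum>I\<in>dtuples n k. \<Sum>p<k. f I * of_bool (I!p = i))"
  proof (rule sum.cong)
    fix I assume I: "I \<in> dtuples n k"
    have "(\<Sum>p<k. f I * of_bool (I!p = i)) = f I * (\<Sum>p<k. of_bool (I!p = i))"
      by (rule sum_distrib_left[symmetric])
    also have "\<dots> = f I * of_bool (i \<in> set I)" by (simp only: count1[OF I])
    finally show "f I * of_bool (i \<in> set I) = (\<Sum>p<k. f I * of_bool (I!p = i))" by (rule sym)
  qed simp
  also have "\<dots> = (\<Sum>p<k. \<Sum>I\<in>dtuples n k. f I * of_bool (I!p = i))" by (rule sum.swap)
  also have "\<dots> = (\<Sum>p<k. \<Sum>I\<in>dtuples n k. f I * of_bool (I!0 = i))"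
  proof (rule sum.cong)
    fix p assume "p \<in> {..<k}"
    then show "(\<Sum>I\<in>dtuples n k. f I * of_bool (I!p = i)) = (\<Sum>I\<in>dtuples n k. f I * of_bool (I!0 = i))"
      using pos1[OF inv, where p=p and q=0 and G="\<lambda>x. of_bool (x = i)"] k by auto
  qed simp
  finally show ?thesis by simp
qed

lemma pos2:
  assumes inv: "\<And>I p q. I \<in> dtuples n k \<Longrightarrow> p < k \<Longrightarrow> q < k \<Longrightarrow> f (swp p q I) = f I"
    and k: "2 \<le> k" and pq: "p < k" "q < k" "p \<noteq> q"
  shows "(\<Sum>I\<in>dtuples n k. f I * (of_bool (I!p = i) * of_bool (I!q = j)))
       = (\<Sum>I\<in>dtuples n k. f I * (of_bool (I!0 = i) * of_bool (I!1 = j)))"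
proof -
  define r where "r = tr 0 p q"
  have r: "r < k" "r \<noteq> 0" using pq k unfolding r_def tr_def by auto
  have "(\<Sum>I\<in>dtuples n k. f I * (of_bool (I!p = i) * of_bool (I!q = j)))
      = (\<Sum>I\<in>dtuples n k. f (swp 0 p I) * (of_bool (swp 0 p I!0 = i) * of_bool (swp 0 p I!r = j)))"
    by (rule sum.cong) (use pq k inv r in \<open>auto simp: swp_nth dtuples_def r_def tr_def\<close>)
  also have "\<dots> = (\<Sum>I\<in>dtuples n k. f I * (of_bool (I!0 = i) * of_bool (I!r = j)))"
    using pq k by (intro sum_swp[symmetric]) auto
  also have "\<dots> = (\<Sum>I\<in>dtuples n k. f (swp 1 r I) * (of_bool (swp 1 r I!0 = i) * of_bool (swp 1 r I!1 = j)))"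
    by (rule sum.cong) (use pq k inv r in \<open>auto simp: swp_nth dtuples_def tr_def\<close>)
  also have "\<dots> = (\<Sum>I\<in>dtuples n k. f I * (of_bool (I!0 = i) * of_bool (I!1 = j)))"
    using r k by (intro sum_swp[symmetric]) auto
  finally show ?thesis .
qed

lemma double:
  assumes inv: "\<And>I p q. I \<in> dtuples n k \<Longrightarrow> p < k \<Longrightarrow> q < k \<Longrightarrow> f (swp p q I) = f I"
    and k: "2 \<le> k" and ij: "i \<noteq> j"
  shows "(\<Sum>I\<in>dtuples n k. f I * of_bool (i \<in> set I \<and> j \<in> set I))
       = real k * (real k - 1) * (\<Sum>I\<in>dtuples n k. f I * (of_bool (I!0 = i) * of_bool (I!1 = j)))"
proof -
  define G where "G = (\<Sum>I\<in>dtuples n k. f I * (of_bool (I!0 = i) * of_bool (I!1 = j)))"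
  have "(\<Sum>I\<in>dtuples n k. f I * of_bool (i \<in> set I \<and> j \<in> set I))
      = (\<Sum>I\<in>dtuples n k. \<Sum>p<k. \<Sum>q<k. f I * (of_bool (I!p = i) * of_bool (I!q = j)))"
  proof (rule sum.cong)
    fix I assume I: "I \<in> dtuples n k"
    have "(\<Sum>p<k. \<Sum>q<k. f I * (of_bool (I!p = i) * of_bool (I!q = j)))
        = f I * ((\<Sum>p<k. of_bool (I!p = i)) * (\<Sum>q<k. of_bool (I!q = j)))"
      by (subst sum_product) (simp only: sum_distrib_left)
    also have "\<dots> = f I * of_bool (i \<in> set I \<and> j \<in> set I)"
      by (simp only: count1[OF I] of_bool_conj)
    finally show "f I * of_bool (i \<in> set I \<and> j \<in> set I) = (\<Sum>p<k. \<Sum>q<k. f I * (of_bool (I!p = i) * of_bool (I!q = j)))" by (rule sym)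
  qed simp
  also have "\<dots> = (\<Sum>p<k. \<Sum>I\<in>dtuples n k. \<Sum>q<k. f I * (of_bool (I!p = i) * of_bool (I!q = j)))"
    by (rule sum.swap)
  also have "\<dots> = (\<Sum>p<k. \<Sum>q<k. \<Sum>I\<in>dtuples n k. f I * (of_bool (I!p = i) * of_bool (I!q = j)))"
    by (rule sum.cong[OF refl], rule sum.swap)
  also have "\<dots> = (\<Sum>p<k. \<Sum>q<k. if p = q then 0 else G)"
  proof (intro sum.cong refl)
    fix p q assume p: "p \<in> {..<k}" and q: "q \<in> {..<k}"
    show "(\<Sum>I\<in>dtuples n k. f I * (of_bool (I!p = i) * of_bool (I!q = j))) = (if p = q then 0 else G)"
    proof (cases "p = q")
      case True
      then show ?thesis using ij by (simp, intro sum.neutral) auto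
    next
      case False
      then show ?thesis unfolding G_def using pos2[OF inv k, where p=p and q=q and i=i and j=j] p q by simp
    qed
  qed
  also have "\<dots> = (\<Sum>p<k. (real k - 1) * G)"
  proof (rule sum.cong)
    fix p assume p: "p \<in> {..<k}"
    have "(\<Sum>q<k. if p = q then 0 else G) = (\<Sum>q\<in>{..<k} - {p}. G)"
      by (rule sum.mono_neutral_cong_right) auto
    also have "\<dots> = (real k - 1) * G" using p k by (simp add: of_nat_diff)
    finally show "(\<Sum>q<k. if p = q then 0 else G) = (real k - 1) * G" .
  qed simp
  finally show ?thesis by (simp add: G_def)
qed


definition c1 :: "nat \<Rightarrow> nat \<Rightarrow> nat \<Rightarrow> real" where
  "c1 n k i = (\<Sum>I\<in>dtuples n k. of_bool (I!0 = i))"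
definition c2 :: "nat \<Rightarrow> nat \<Rightarrow> nat \<Rightarrow> nat \<Rightarrow> real" where
  "c2 n k i j = (\<Sum>I\<in>dtuples n k. of_bool (I!0 = i) * of_bool (I!1 = j))"

lemma c1_eq: assumes k: "1 \<le> k" and a: "a \<in> {1..n}" and b: "b \<in> {1..n}"
  shows "c1 n k b = c1 n k a"
proof -
  have "c1 n k b = (\<Sum>I\<in>dtuples n k. of_bool (map (tr a b) I ! 0 = b))"
    unfolding c1_def by (rule sum_maptr[OF a b])
  also have "\<dots> = c1 n k a" unfolding c1_def
    by (rule sum.cong) (use k in \<open>auto simp: dtuples_def tr_eq_iff\<close>)
  finally show ?thesis .
qed

lemma sum_c1: assumes k: "1 \<le> k"
  shows "(\<Sum>i\<in>{1..n}. c1 n k i) = real (card (dtuples n k))"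
proof -
  have "(\<Sum>i\<in>{1..n}. c1 n k i) = (\<Sum>I\<in>dtuples n k. \<Sum>i\<in>{1..n}. of_bool (I!0 = i))"
    unfolding c1_def by (rule sum.swap)
  also have "\<dots> = (\<Sum>I\<in>dtuples n k. 1)"
  proof (rule sum.cong)
    fix I assume I: "I \<in> dtuples n k"
    have "I!0 \<in> set I" using I k by (auto simp: dtuples_def)
    then have "I!0 \<in> {1..n}" using I by (auto simp: dtuples_def)
    then show "(\<Sum>i\<in>{1..n}. of_bool (I!0 = i) :: real) = 1"
      by (simp add: of_bool_def sum.delta)
  qed simp
  finally show ?thesis by simp
qed

lemma c1_val: assumes k: "1 \<le> k" and i: "i \<in> {1..n}"
  shows "real n * c1 n k i = real (card (dtuples n k))"
proof -
  have "(\<Sum>i'\<in>{1..n}. c1 n k i') = (\<Sum>i'\<in>{1..n}. c1 n k i)"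
    by (rule sum.cong) (use c1_eq[OF k i] in auto)
  then show ?thesis using sum_c1[OF k] by simp
qed

lemma c2_eq: assumes k: "2 \<le> k" and a: "a \<in> {1..n}" and b: "b \<in> {1..n}" and i: "i \<noteq> a" "i \<noteq> b"
  shows "c2 n k i b = c2 n k i a"
proof -
  have "c2 n k i b = (\<Sum>I\<in>dtuples n k. of_bool (map (tr a b) I ! 0 = i) * of_bool (map (tr a b) I ! 1 = b))"
    unfolding c2_def by (rule sum_maptr[OF a b])
  also have "\<dots> = c2 n k i a" unfolding c2_def
    by (rule sum.cong) (use k i in \<open>auto simp: dtuples_def tr_eq_iff tr_def\<close>)
  finally show ?thesis .
qed

lemma sum_c2: assumes k: "2 \<le> k"
  shows "(\<Sum>j\<in>{1..n}. c2 n k i j) = c1 n k i"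
proof -
  have "(\<Sum>j\<in>{1..n}. c2 n k i j) = (\<Sum>I\<in>dtuples n k. \<Sum>j\<in>{1..n}. of_bool (I!0 = i) * of_bool (I!1 = j))"
    unfolding c2_def by (rule sum.swap)
  also have "\<dots> = c1 n k i" unfolding c1_def
  proof (rule sum.cong)
    fix I assume I: "I \<in> dtuples n k"
    have "I!1 \<in> set I" using I k by (auto simp: dtuples_def)
    then have "I!1 \<in> {1..n}" using I by (auto simp: dtuples_def)
    then have "(\<Sum>j\<in>{1..n}. of_bool (I!1 = j) :: real) = 1"
      by (simp add: of_bool_def sum.delta)
    then show "(\<Sum>j\<in>{1..n}. of_bool (I!0 = i) * of_bool (I!1 = j) :: real) = of_bool (I!0 = i)"
      by (simp add: sum_distrib_left[symmetric])
  qed simp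
  finally show ?thesis .
qed

lemma c2_diag: assumes k: "2 \<le> k" shows "c2 n k i i = 0"
  unfolding c2_def by (rule sum.neutral) (use k in \<open>auto simp: dtuples_def distinct_conv_nth, metis One_nat_def Suc_le_lessD le_trans less_imp_le_nat n_not_Suc_n one_le_numeral Suc_1\<close>)

lemma c2_val: assumes k: "2 \<le> k" and i: "i \<in> {1..n}" and j: "j \<in> {1..n}" and ij: "i \<noteq> j"
  shows "(real n - 1) * c2 n k i j = c1 n k i"
proof -
  have "c1 n k i = (\<Sum>j'\<in>{1..n}. c2 n k i j')" using sum_c2[OF k] by simp
  also have "\<dots> = c2 n k i i + (\<Sum>j'\<in>{1..n}-{i}. c2 n k i j')"
    using i by (simp add: sum.remove)
  also have "\<dots> = (\<Sum>j'\<in>{1..n}-{i}. c2 n k i j')"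
    using c2_diag[OF k] by simp
  also have "\<dots> = (\<Sum>j'\<in>{1..n}-{i}. c2 n k i j)"
    using c2_eq[OF k j _ ] ij by (intro sum.cong) auto
  also have "\<dots> = (real n - 1) * c2 n k i j" using i by (simp add: of_nat_diff)
  finally show ?thesis by simp
qed


lemma choose2_real: "real (m choose 2) = real m * (real m - 1) / 2"
proof (induction m)
  case 0
  then show ?case by simp
next
  case (Suc m)
  have "Suc m choose 2 = m + (m choose 2)"
    using binomial_Suc_Suc[of m 1] by (simp add: numeral_2_eq_2)
  then show ?case using Suc by (simp add: field_simps)
qed

lemma D_props: assumes "k \<le> n" shows "finite (dtuples n k)" "dtuples n k \<noteq> {}" "card (dtuples n k) > 0"
  using finite_D D_ne[OF assms] by (auto simp: card_gt_0_iff)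

lemma exp_D: fixes f :: "nat list \<Rightarrow> real" assumes "k \<le> n"
  shows "measure_pmf.expectation (subsamp n k) f = (\<Sum>I\<in>dtuples n k. f I) / real (card (dtuples n k))"
  unfolding subsamp_def using D_props[OF assms] by (simp add: integral_pmf_of_set)

lemma cond_exp: fixes f :: "nat list \<Rightarrow> real" assumes "k \<le> n" and ne: "(\<Sum>I\<in>dtuples n k. of_bool (I \<in> A) :: real) \<noteq> 0"
  shows "measure_pmf.expectation (cond_pmf (subsamp n k) A) f
       = (\<Sum>I\<in>dtuples n k. f I * of_bool (I \<in> A)) / (\<Sum>I\<in>dtuples n k. of_bool (I \<in> A))"
proof -
  let ?D = "dtuples n k"
  note DP = D_props[OF assms(1)]
  have cardeq: "(\<Sum>I\<in>?D. of_bool (I \<in> A) :: real) = real (card (?D \<inter> A))"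
    using DP by (simp add: of_bool_def sum.If_cases Int_def)
  have DA: "?D \<inter> A \<noteq> {}" using ne cardeq by auto
  have sp: "set_pmf (subsamp n k) \<inter> A \<noteq> {}" using DA DP by (simp add: subsamp_def)
  have "cond_pmf (subsamp n k) A = pmf_of_set (?D \<inter> A)"
  proof (rule pmf_eqI)
    fix I
    show "pmf (cond_pmf (subsamp n k) A) I = pmf (pmf_of_set (?D \<inter> A)) I"
      using DP DA sp by (auto simp: pmf_cond subsamp_def measure_pmf_of_set indicator_def)
  qed
  then have "measure_pmf.expectation (cond_pmf (subsamp n k) A) f = sum f (?D \<inter> A) / real (card (?D \<inter> A))"
    using DP DA by (simp add: integral_pmf_of_set)
  also have "sum f (?D \<inter> A) = (\<Sum>I\<in>?D. f I * of_bool (I \<in> A))"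
    using DP by (simp add: sum.inter_restrict of_bool_def if_distrib cong: if_cong)
  finally show ?thesis using cardeq by simp
qed



lemma alg_id:
  fixes n m N k B Ai Aj T0 :: real
  assumes "n \<noteq> 0" "m \<noteq> 0" "N \<noteq> 0"
  shows "(k * (k - 1) * B - (k - 1) / m * (k * Ai) - (k - 1) / m * (k * Aj) + k * (k - 1) / (n * m) * T0) / N
       = k * (k - 1) / (n * m) * (B * (n * m) / N - Ai * n / N - Aj * n / N + T0 / N)"
  using assms by (simp add: field_simps)

theorem proposition2:
  fixes x :: "nat \<Rightarrow> 'a" and s :: "'a list \<Rightarrow> real" and n k :: nat
  assumes "2 \<le> k" and "k \<le> n" and "sym_fun k s"
  defines "sstar \<equiv> (\<lambda>I. s (map x I))"
  defines "s0 \<equiv> measure_pmf.expectation (subsamp n k) sstar"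
  defines "e1 \<equiv> (\<lambda>i. measure_pmf.expectation
                      (cond_pmf (subsamp n k) {I. I ! 0 = i}) sstar)"
  defines "e2 \<equiv> (\<lambda>i j. measure_pmf.expectation
                      (cond_pmf (subsamp n k) {I. I ! 0 = i \<and> I ! 1 = j}) sstar)"
  shows "(\<forall>i\<in>{1..n}. \<forall>j\<in>{1..n}. i \<noteq> j \<longrightarrow>
            pmf_cov (subsamp n k) sstar (wstar n k i j) =
              real (k choose 2) / real (n choose 2) * (e2 i j - e1 i - e1 j + s0))
       \<and> (\<Sum>(i,j)\<in>{(i,j). i \<in> {1..n} \<and> j \<in> {1..n} \<and> i < j}.
            (pmf_cov (subsamp n k) sstar (wstar n k i j))\<^sup>2) =
          (real (k choose 2))\<^sup>2 / (real (n choose 2))\<^sup>2 *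
            (\<Sum>(i,j)\<in>{(i,j). i \<in> {1..n} \<and> j \<in> {1..n} \<and> i < j}.
               (e2 i j - e1 i - e1 j + s0)\<^sup>2)"
proof -
  let ?D = "dtuples n k"
  have k1: "1 \<le> k" and k2: "2 \<le> k" using assms(1) by auto
  have n2: "real n \<ge> 2" using assms(1,2) by simp
  note DP = D_props[OF assms(2)]
  define N where "N = real (card ?D)"
  have Npos: "N > 0" using DP unfolding N_def by simp
  have inv_s: "sstar (swp p q I) = sstar I" if "I \<in> ?D" "p < k" "q < k" for I p q
  proof -
    have L: "length I = k" using that by (simp add: dtuples_def)
    have "mset (map x (swp p q I)) = mset (map x I)"
      unfolding mset_map using swp_mset[of p I q] that L by simp
    then show ?thesis using assms(3) L unfolding sym_fun_def sstar_def by (metis length_map)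
  qed
  have inv_1: "(\<lambda>_. 1::real) (swp p q I) = (\<lambda>_. 1) I" for I p q by simp
  define a where "a = (real k - 1) / (real n - 1)"
  define b where "b = real k * (real k - 1) / (real n * (real n - 1))"
  define T0 where "T0 = (\<Sum>I\<in>?D. sstar I)"
  define A where "A = (\<lambda>i. \<Sum>I\<in>?D. sstar I * of_bool (I!0 = i))"
  define B where "B = (\<lambda>i j. \<Sum>I\<in>?D. sstar I * (of_bool (I!0 = i) * of_bool (I!1 = j)))"
  have s0_eq: "s0 = T0 / N" unfolding s0_def T0_def N_def by (rule exp_D[OF assms(2)])
  have c1v: "c1 n k i = N / real n" if "i \<in> {1..n}" for i
    using c1_val[OF k1 that] n2 unfolding N_def by (simp add: field_simps)
  have c2v: "c2 n k i j = N / (real n * (real n - 1))" if "i \<in> {1..n}" "j \<in> {1..n}" "i \<noteq> j" for i j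
    using c2_val[OF k2 that] c1v[OF that(1)] n2 by (simp add: field_simps)
  have e1v: "e1 i = A i * real n / N" if "i \<in> {1..n}" for i
  proof -
    have nz: "c1 n k i \<noteq> 0" using c1v[OF that] Npos n2 by simp
    have "e1 i = A i / c1 n k i" unfolding e1_def A_def
      using cond_exp[OF assms(2), of "{I. I!0 = i}" sstar] nz by (simp add: c1_def)
    then show ?thesis using c1v[OF that] Npos n2 by (simp add: field_simps)
  qed
  have e2v: "e2 i j = B i j * (real n * (real n - 1)) / N" if "i \<in> {1..n}" "j \<in> {1..n}" "i \<noteq> j" for i j
  proof -
    have nz: "real n * (real n - 1) \<noteq> 0" using n2 by simp
    have nz2: "c2 n k i j \<noteq> 0" using c2v[OF that] Npos nz by simp
    have "e2 i j = B i j / c2 n k i j" unfolding e2_def B_def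
      using cond_exp[OF assms(2), of "{I. I!0 = i \<and> I!1 = j}" sstar] nz2 by (simp add: c2_def of_bool_conj)
    then show ?thesis using c2v[OF that] Npos nz by (simp add: field_simps)
  qed
  have cov: "pmf_cov (subsamp n k) sstar (wstar n k i j) =
              real (k choose 2) / real (n choose 2) * (e2 i j - e1 i - e1 j + s0)"
    if ij: "i \<in> {1..n}" "j \<in> {1..n}" "i \<noteq> j" for i j
  proof -
    have w_expand: "wstar n k i j I = of_bool (i \<in> set I \<and> j \<in> set I) - a * of_bool (i \<in> set I)
        - a * of_bool (j \<in> set I) + b" for I
      unfolding wstar_def a_def b_def by simp
    have S1: "(\<Sum>I\<in>?D. f I * of_bool (i' \<in> set I)) = real k * (\<Sum>I\<in>?D. f I * of_bool (I!0 = i'))"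
      if "\<And>I p q. I \<in> ?D \<Longrightarrow> p < k \<Longrightarrow> q < k \<Longrightarrow> f (swp p q I) = f I" for f i'
      by (rule single[OF that k1])
    have S2: "(\<Sum>I\<in>?D. f I * of_bool (i \<in> set I \<and> j \<in> set I)) = real k * (real k - 1) * (\<Sum>I\<in>?D. f I * (of_bool (I!0 = i) * of_bool (I!1 = j)))"
      if "\<And>I p q. I \<in> ?D \<Longrightarrow> p < k \<Longrightarrow> q < k \<Longrightarrow> f (swp p q I) = f I" for f
      by (rule double[OF that k2 ij(3)])
    have sumw: "(\<Sum>I\<in>?D. wstar n k i j I) = 0"
    proof -
      have "(\<Sum>I\<in>?D. wstar n k i j I) = (\<Sum>I\<in>?D. 1 * of_bool (i \<in> set I \<and> j \<in> set I))
          - a * (\<Sum>I\<in>?D. 1 * of_bool (i \<in> set I)) - a * (\<Sum>I\<in>?D. 1 * of_bool (j \<in> set I)) + b * N"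
        unfolding w_expand N_def by (simp add: sum.distrib sum_subtractf sum_distrib_left)
      also have "\<dots> = real k * (real k - 1) * c2 n k i j - a * (real k * c1 n k i) - a * (real k * c1 n k j) + b * N"
        unfolding c1_def c2_def using S1[of "\<lambda>_. 1"] S2[of "\<lambda>_. 1"] by simp
      also have "\<dots> = 0" 
        apply (simp only: c1v[OF ij(1)] c1v[OF ij(2)] c2v[OF ij] a_def b_def)
        using n2 by (simp add: field_simps)
      finally show ?thesis .
    qed
    have Ew: "measure_pmf.expectation (subsamp n k) (wstar n k i j) = 0"
      using exp_D[OF assms(2)] sumw by simp
    have "pmf_cov (subsamp n k) sstar (wstar n k i j) = (\<Sum>I\<in>?D. (sstar I - s0) * wstar n k i j I) / N"
      unfolding pmf_cov_def Ew s0_def[symmetric] N_def by (simp add: exp_D[OF assms(2)])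
    also have "(\<Sum>I\<in>?D. (sstar I - s0) * wstar n k i j I) = (\<Sum>I\<in>?D. sstar I * wstar n k i j I)"
      using sumw by (simp add: algebra_simps sum_subtractf sum_distrib_left[symmetric])
    also have "\<dots> = (\<Sum>I\<in>?D. sstar I * of_bool (i \<in> set I \<and> j \<in> set I))
          - a * (\<Sum>I\<in>?D. sstar I * of_bool (i \<in> set I)) - a * (\<Sum>I\<in>?D. sstar I * of_bool (j \<in> set I)) + b * T0"
      unfolding w_expand T0_def by (simp add: algebra_simps sum.distrib sum_subtractf sum_distrib_left)
    also have "\<dots> = real k * (real k - 1) * B i j - a * (real k * A i) - a * (real k * A j) + b * T0"
      unfolding A_def B_def using S1[of sstar] S2[of sstar] inv_s by simp
    finally have cv: "pmf_cov (subsamp n k) sstar (wstar n k i j) =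
       (real k * (real k - 1) * B i j - a * (real k * A i) - a * (real k * A j) + b * T0) / N" .
    have bb: "real (k choose 2) / real (n choose 2) = b" unfolding b_def choose2_real by simp
    have nn: "real n \<noteq> 0" "real n - 1 \<noteq> 0" "N \<noteq> 0" using n2 Npos by auto
    show ?thesis
      apply (simp only: cv bb e1v[OF ij(1)] e1v[OF ij(2)] e2v[OF ij] s0_eq a_def b_def)
      by (rule alg_id[OF nn])
  qed
  show ?thesis
  proof
    show "\<forall>i\<in>{1..n}. \<forall>j\<in>{1..n}. i \<noteq> j \<longrightarrow>
            pmf_cov (subsamp n k) sstar (wstar n k i j) =
              real (k choose 2) / real (n choose 2) * (e2 i j - e1 i - e1 j + s0)"
      using cov by blast
    have "(\<Sum>(i,j)\<in>{(i,j). i \<in> {1..n} \<and> j \<in> {1..n} \<and> i < j}.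
            (pmf_cov (subsamp n k) sstar (wstar n k i j))\<^sup>2) =
          (\<Sum>(i,j)\<in>{(i,j). i \<in> {1..n} \<and> j \<in> {1..n} \<and> i < j}.
            (real (k choose 2))\<^sup>2 / (real (n choose 2))\<^sup>2 * (e2 i j - e1 i - e1 j + s0)\<^sup>2)"
      by (rule sum.cong) (auto simp: cov power_mult_distrib power_divide)
    then show "(\<Sum>(i,j)\<in>{(i,j). i \<in> {1..n} \<and> j \<in> {1..n} \<and> i < j}.
            (pmf_cov (subsamp n k) sstar (wstar n k i j))\<^sup>2) =
          (real (k choose 2))\<^sup>2 / (real (n choose 2))\<^sup>2 *
            (\<Sum>(i,j)\<in>{(i,j). i \<in> {1..n} \<and> j \<in> {1..n} \<and> i < j}.
               (e2 i j - e1 i - e1 j + s0)\<^sup>2)"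
      by (simp add: sum_distrib_left case_prod_unfold)
  qed
qed

end
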